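(* Let $a,b,c$ be positive integers and $r=[2a,-2,-2b,2c]$. If $bc\ge 2a(c+1)$, then all zeros of $\Delta_{K(r)}(t)$ are real (i.e. $K(r)$ is stable).
   Context: For a finite sequence $r=[2a_1,2a_2,\dots,2a_n]$ of nonzero even integers, $K(r)$ denotes the 2-bridge knot or link whose associated rational number has the even continued fraction expansion $1/(2a_1-1/(2a_2-\cdots-1/(2a_n)))$ ($K(r)$ is a knot if $n$ is even and a 2-component link if $n$ is odd). Let $M(r)$ be the $n\times n$ integer matrix whose $(k,k)$-entry is $a_k$ ($1\le k\le n$), whose $(k,k+1)$-entry is $1$ ($1\le k\le n-1$), and whose other entries are $0$; it is a Seifert matrix of $K(r)$, and $\Delta_{K(r)}(t)=\det(tM(r)-M(r)^T)$ is the (reduced) Alexander polynomial of $K(r)$ (well defined up to sign). A knot or link is called stable if all zeros of its Alexander polynomial are real. *)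

theory Defs
  imports "Jordan_Normal_Form.Determinant" "HOL-Computational_Algebra.Polynomial"
begin

text \<open>For r = [2a_1,...,2a_n] (a list of nonzero even integers), the Seifert matrix M(r):
  (k,k)-entry a_k, (k,k+1)-entry 1, all other entries 0 (0-based indices).\<close>
definition seifert_matrix :: "int list \<Rightarrow> int mat" where
  "seifert_matrix r = mat (length r) (length r)
     (\<lambda>(i,j). if i = j then (r ! i) div 2 else if j = i + 1 then 1 else 0)"

definition alexander_poly :: "int list \<Rightarrow> int poly" where
  "alexander_poly r = (let M = seifert_matrix r in
     det (mat (length r) (length r)
       (\<lambda>(i,j). monom (M $$ (i,j)) 1 - [:M $$ (j,i):])))"

definition stable :: "int list \<Rightarrow> bool" where
  "stable r \<longleftrightarrow> (\<forall>z::complex. poly (map_poly of_int (alexander_poly r)) z = 0 \<longrightarrow> z \<in> \<real>)"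

end

theory Submission
  imports Defs
begin

lemma lessThan3: "{..<3::nat} = {0,1,2}" by auto
lemma lessThan4: "{..<4::nat} = {0,1,2,3}" by auto
lemma det2: assumes "A \<in> carrier_mat 2 2"
  shows "det A = A$$(0,0)*A$$(1,1) - A$$(0,1)*A$$(1,0)"
  using assms by (simp add: laplace_expansion_row[OF assms, of 0] cofactor_def mat_delete_def det_single numeral_2_eq_2)

lemma det3: assumes "(A::'a::comm_ring_1 mat) \<in> carrier_mat 3 3"
  shows "det A = A$$(0,0)*(A$$(1,1)*A$$(2,2) - A$$(1,2)*A$$(2,1))
     - A$$(0,1)*(A$$(1,0)*A$$(2,2) - A$$(1,2)*A$$(2,0))
     + A$$(0,2)*(A$$(1,0)*A$$(2,1) - A$$(1,1)*A$$(2,0))"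
proof -
  have "det A = (\<Sum>j<3. A $$ (0,j) * cofactor A 0 j)" by (rule laplace_expansion_row[OF assms]) auto
  also have "\<dots> = A$$(0,0)*cofactor A 0 0 + A$$(0,1)*cofactor A 0 1 + A$$(0,2)*cofactor A 0 2"
    by (simp add: lessThan3)
  finally show ?thesis using assms
    by (simp add: cofactor_def det2 mat_delete_carrier mat_delete_def algebra_simps numeral_2_eq_2)
qed

lemma det4: assumes "(A::'a::comm_ring_1 mat) \<in> carrier_mat 4 4"
  shows "det A = A$$(0,0)*cofactor A 0 0 + A$$(0,1)*cofactor A 0 1 + A$$(0,2)*cofactor A 0 2 + A$$(0,3)*cofactor A 0 3"
proof -
  have "det A = (\<Sum>j<4. A $$ (0,j) * cofactor A 0 j)" by (rule laplace_expansion_row[OF assms]) auto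
  also have "\<dots> = A$$(0,0)*cofactor A 0 0 + A$$(0,1)*cofactor A 0 1 + A$$(0,2)*cofactor A 0 2 + A$$(0,3)*cofactor A 0 3"
    by (simp add: lessThan4)
  finally show ?thesis .
qed

lemma det4full: assumes "(A::'a::comm_ring_1 mat) \<in> carrier_mat 4 4"
  shows "det A = A$$(0,0) * A$$(1,1) * A$$(2,2) * A$$(3,3) - A$$(0,0) * A$$(1,1) * A$$(2,3) * A$$(3,2) - A$$(0,0) * A$$(1,2) * A$$(2,1) * A$$(3,3) + A$$(0,0) * A$$(1,2) * A$$(2,3) * A$$(3,1) + A$$(0,0) * A$$(1,3) * A$$(2,1) * A$$(3,2) - A$$(0,0) * A$$(1,3) * A$$(2,2) * A$$(3,1) - A$$(0,1) * A$$(1,0) * A$$(2,2) * A$$(3,3) + A$$(0,1) * A$$(1,0) * A$$(2,3) * A$$(3,2) + A$$(0,1) * A$$(1,2) * A$$(2,0) * A$$(3,3) - A$$(0,1) * A$$(1,2) * A$$(2,3) * A$$(3,0) - A$$(0,1) * A$$(1,3) * A$$(2,0) * A$$(3,2) + A$$(0,1) * A$$(1,3) * A$$(2,2) * A$$(3,0) + A$$(0,2) * A$$(1,0) * A$$(2,1) * A$$(3,3) - A$$(0,2) * A$$(1,0) * A$$(2,3) * A$$(3,1) - A$$(0,2) * A$$(1,1) * A$$(2,0) * A$$(3,3) + A$$(0,2) * A$$(1,1) * A$$(2,3) * A$$(3,0) + A$$(0,2) * A$$(1,3) * A$$(2,0) * A$$(3,1) - A$$(0,2) * A$$(1,3) *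 A$$(2,1) * A$$(3,0) - A$$(0,3) * A$$(1,0) * A$$(2,1) * A$$(3,2) + A$$(0,3) * A$$(1,0) * A$$(2,2) * A$$(3,1) + A$$(0,3) * A$$(1,1) * A$$(2,0) * A$$(3,2) - A$$(0,3) * A$$(1,1) * A$$(2,2) * A$$(3,0) - A$$(0,3) * A$$(1,2) * A$$(2,0) * A$$(3,1) + A$$(0,3) * A$$(1,2) * A$$(2,1) * A$$(3,0)"
proof -
  have C: "mat_delete A 0 j \<in> carrier_mat 3 3" for j using mat_delete_carrier[OF assms, of 0 j] by simp
  show ?thesis
    unfolding det4[OF assms] cofactor_def det3[OF C]
    using assms by (simp add: mat_delete_def numeral_2_eq_2 numeral_3_eq_3 algebra_simps)
qed

lemma alex: "alexander_poly [2*a, -2, -2*b, 2*c] =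
  [: a*b*c, -4*(a*b*c) + (a*c-b*c-a), 6*(a*b*c) - 2*(a*c-b*c-a) + 1, -4*(a*b*c) + (a*c-b*c-a), a*b*c :]"
  (is "_ = ?P")
proof -
  define N where "N = mat 4 4 (\<lambda>(i,j). monom (seifert_matrix [2*a, -2, -2*b, 2*c] $$ (i,j)) 1 - [:seifert_matrix [2*a, -2, -2*b, 2*c] $$ (j,i):])"
  have C: "N \<in> carrier_mat 4 4" unfolding N_def by simp
  have "alexander_poly [2*a, -2, -2*b, 2*c] = det N" 
  proof -
    have "length [2*a, -2, -2*b, 2*c] = 4" by simp
    then show ?thesis unfolding alexander_poly_def N_def Let_def by metis
  qed
  also have "\<dots> = ?P"
  proof -
    have d: "- (2 * b) div 2 = - b" by simp
    have "poly (det N) x = poly ?P x" for x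
      unfolding det4full[OF C]
      using d by (simp add: N_def seifert_matrix_def poly_monom algebra_simps power2_eq_square power3_eq_cube)
    then have "poly (det N) = poly ?P" by (rule ext)
    then show ?thesis by (simp add: poly_eq_poly_eq_iff)
  qed
  finally show ?thesis .
qed

lemma alexc: "poly (map_poly of_int (alexander_poly [2*a, -2, -2*b, 2*c])) (z::complex) =
   of_int (a*b*c) * (z-1)^4 + of_int (a*c-b*c-a) * z * (z-1)^2 + z^2"
  unfolding alex by (simp add: map_poly_pCons algebra_simps power2_eq_square power3_eq_cube eval_nat_numeral)

lemma quad_real:
  fixes p q :: real and z :: complex
  assumes "p^2 \<ge> 4*q" "z^2 + of_real p * z + of_real q = 0"
  shows "z \<in> \<real>"
proof -
  define s where "s = sqrt (p^2 - 4*q)"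
  have s2: "s^2 = p^2 - 4*q" unfolding s_def using assms(1) by simp
  define r1 where "r1 = (-p + s)/2"
  define r2 where "r2 = (-p - s)/2"
  have e1: "r1 + r2 = -p" unfolding r1_def r2_def by (simp add: field_simps)
  have e2: "r1 * r2 = q" unfolding r1_def r2_def using s2
    by (simp add: field_simps power2_eq_square)
  have "(z - of_real r1) * (z - of_real r2) = z^2 - of_real (r1 + r2) * z + of_real (r1*r2)"
    by (simp add: algebra_simps power2_eq_square)
  also have "\<dots> = z^2 + of_real p * z + of_real q" by (simp add: e1 e2)
  finally have "(z - of_real r1) * (z - of_real r2) = 0" using assms(2) by simp
  then have "z = of_real r1 \<or> z = of_real r2" by simp
  then show ?thesis by auto
qed

theorem proposition8p1:
  fixes a b c :: int
  assumes "a > 0" "b > 0" "c > 0"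
    and "b * c \<ge> 2 * a * (c + 1)"
  shows "stable [2*a, -2, -2*b, 2*c]"
  unfolding stable_def
proof (intro allI impI)
  fix z :: complex
  assume "poly (map_poly of_int (alexander_poly [2*a, -2, -2*b, 2*c])) z = 0"
  then have E: "of_int (a*b*c) * (z-1)^4 + of_int (a*c-b*c-a) * z * (z-1)^2 + z^2 = 0"
    using alexc[of a b c z] by simp
  define A where "A = a*b*c"
  define K where "K = a*c-b*c-a"
  have Apos: "A > 0" unfolding A_def using assms by simp
  have ac: "a*c > 0" using assms by simp
  have h4: "b*c \<ge> 2*(a*c) + 2*a" using assms(4) by (simp add: algebra_simps)
  have Kneg: "K < 0" unfolding K_def using ac h4 assms(1) by linarith
  have disc: "K^2 \<ge> 4*A"
  proof -
    define B where "B = b*c - a*c + a"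
    have B1: "B \<ge> a*c + 3*a" unfolding B_def using h4 by linarith
    have "(B - (a*c+3*a)) * (B + (a*c+3*a) - 4*a) \<ge> 0"
      using B1 ac assms(1) by (intro mult_nonneg_nonneg) linarith+
    moreover have "K^2 - 4*A = (B - (a*c+3*a)) * (B + (a*c+3*a) - 4*a) + a^2*(c-1)^2"
      unfolding K_def A_def B_def by (simp add: algebra_simps power2_eq_square)
    moreover have "a^2*(c-1)^2 \<ge> 0" by simp
    ultimately show ?thesis by linarith
  qed
  have E2: "of_int A * (z-1)^4 + of_int K * z * (z-1)^2 + z^2 = 0" using E unfolding A_def K_def .
  have z0: "z \<noteq> 0"
  proof
    assume "z = 0" then show False using E2 Apos by simp
  qed
  define u where "u = (z-1)^2 / z"
  have uz: "u * z = (z-1)^2" unfolding u_def using z0 by simp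
  have "z^2 * (of_int A * u^2 + of_int K * u + 1) = of_int A * (u*z)^2 + of_int K * z * (u*z) + z^2"
    by (simp add: algebra_simps power2_eq_square)
  also have "\<dots> = of_int A * ((z-1)^2)^2 + of_int K * z * (z-1)^2 + z^2" by (simp only: uz)
  also have "\<dots> = 0" using E2 by (simp add: power_mult[symmetric])
  finally have "z^2 * (of_int A * u^2 + of_int K * u + 1) = 0" .
  then have U: "of_int A * u^2 + of_int K * u + 1 = 0" using z0 by simp
  have "u^2 + of_real (K/A) * u + of_real (1/A) = 0"
  proof -
    have "of_int A * (u^2 + of_real (K/A) * u + of_real (1/A)) = of_int A * u^2 + of_int K * u + 1"
      using Apos by (simp add: algebra_simps)
    then show ?thesis using U Apos by simp
  qed
  moreover have "(K/A)^2 \<ge> 4 * (1/A)"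
  proof -
    have "(real_of_int K)^2 \<ge> 4 * real_of_int A" using disc by (metis of_int_le_iff of_int_mult of_int_numeral of_int_power)
    then show ?thesis using Apos by (simp add: field_simps power2_eq_square)
  qed
  ultimately have "u \<in> \<real>" using quad_real by blast
  then obtain v where v: "u = of_real v" by (auto elim: Reals_cases)
  have Uv: "real_of_int A * v^2 + real_of_int K * v + 1 = 0"
  proof -
    have "complex_of_real (real_of_int A * v^2 + real_of_int K * v + 1) = 0" using U v by simp
    then show ?thesis by (metis of_real_eq_0_iff)
  qed
  have vpos: "v \<ge> 0"
  proof (rule ccontr)
    assume "\<not> v \<ge> 0"
    then have "real_of_int K * v > 0" using Kneg by (simp add: mult_neg_neg)
    moreover have "real_of_int A * v^2 \<ge> 0" using Apos by simp
    ultimately show False using Uv by linarith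
  qed
  have "z^2 + of_real (-(v+2)) * z + of_real 1 = 0"
    using uz v by (simp add: algebra_simps power2_eq_square)
  moreover have "(-(v+2))^2 \<ge> 4*1" using vpos by (simp add: power2_eq_square algebra_simps)
  ultimately show "z \<in> \<real>" using quad_real by blast
qed
end
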